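(* Let $\kappa:=\operatorname{arccosh}(3/2)$, $p$ a positive integer, $\xi:=\kappa+2p\pi i$, and \[ F(z):=\frac1\xi\left(\mathcal{L}_2\left(\frac{\xi(1-z)}{2\pi i}-p+1\right)-\mathcal{L}_2\left(\frac{\xi(1+z)}{2\pi i}-p\right)\right)-\kappa z+\frac{4p\pi^2}{\xi}. \] If $-\kappa<\Re(\xi z)<\kappa$ or $0<\Im(\xi z)<2\pi$, then \[ F(z)=\frac1\xi\mathrm{Li}_2\left(e^{-\xi(1+z)}\right)-\frac1\xi\mathrm{Li}_2\left(e^{-\xi(1-z)}\right)+\kappa z-2\pi i. \] Moreover, if $0<\Im(\xi z)<2\pi$, then also \[ F(z)=\frac1\xi\mathrm{Li}_2\left(e^{\xi(1-z)}\right)-\frac1\xi\mathrm{Li}_2\left(e^{\xi(1+z)}\right)-\kappa z+\frac{4p\pi^2}{\xi}. \]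
   Context: $\mathcal{L}_2(w):=\mathrm{Li}_2(e^{2\pi iw})$ if $\Im w\ge0$ and $\mathcal{L}_2(w):=\pi^2(2w^2-2w+\frac13)-\mathrm{Li}_2(e^{-2\pi iw})$ if $\Im w<0$, for $w\in\mathbb{C}\setminus((-\infty,0]\cup[1,\infty))$, where $\mathrm{Li}_2(z)=-\int_0^z\frac{\log(1-x)}{x}dx$ is the dilogarithm with branch cut $[1,\infty)$. *)

theory Defs
  imports "HOL-Complex_Analysis.Complex_Analysis"
begin

text \<open>Dilogarithm Li2(z) = - integral from 0 to z of log(1-x)/x dx, integrated along the
  straight segment from 0 to z (principal branch, branch cut [1,infinity)).  The integrand
  has a removable singularity at 0 with value -1.\<close>
definition Li2 :: "complex \<Rightarrow> complex" where
  "Li2 z = - contour_integral (linepath 0 z) (\<lambda>x. if x = 0 then -1 else Ln (1 - x) / x)"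

definition calL2 :: "complex \<Rightarrow> complex" where
  "calL2 w = (if Im w \<ge> 0 then Li2 (exp (2 * pi * \<i> * w))
              else of_real (pi^2) * (2 * w^2 - 2 * w + 1/3) - Li2 (exp (- 2 * pi * \<i> * w)))"

definition kappa :: real where
  "kappa = arcosh (3/2)"

definition xi :: "nat \<Rightarrow> complex" where
  "xi p = of_real kappa + 2 * of_nat p * of_real pi * \<i>"

definition Fp :: "nat \<Rightarrow> complex \<Rightarrow> complex" where
  "Fp p z = (1 / xi p) * (calL2 (xi p * (1 - z) / (2 * pi * \<i>) - of_nat p + 1)
                         - calL2 (xi p * (1 + z) / (2 * pi * \<i>) - of_nat p))
            - of_real kappa * z + 4 * of_nat p * of_real (pi^2) / xi p"

end

theory Submission
  imports Defs
begin


definition D2 :: "complex set" where "D2 = {z. Im z \<noteq> 0 \<or> Re z < 1}"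
definition fI :: "complex \<Rightarrow> complex" where "fI x = (if x = 0 then -1 else Ln (1 - x) / x)"

lemma Li2_fI: "Li2 z = - contour_integral (linepath 0 z) fI"
  unfolding Li2_def fI_def by simp

lemma open_D2: "open D2"
proof -
  have "D2 = {z. Im z < 0} \<union> {z. Im z > 0} \<union> {z. Re z < 1}"
    unfolding D2_def by auto
  then show ?thesis
    by (metis open_Un open_halfspace_Im_lt open_halfspace_Im_gt open_halfspace_Re_lt)
qed

lemma D2_nonpos: "x \<in> D2 \<Longrightarrow> 1 - x \<notin> \<real>\<^sub>\<le>\<^sub>0"
  unfolding D2_def by (auto simp: complex_nonpos_Reals_iff)

lemma seg_D2: "x \<in> D2 \<Longrightarrow> closed_segment 0 x \<subseteq> D2"
proof
  fix y assume x: "x \<in> D2" and "y \<in> closed_segment 0 x"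
  then obtain u::real where u: "0 \<le> u" "u \<le> 1" "y = u *\<^sub>R x"
    by (auto simp: closed_segment_def)
  show "y \<in> D2"
  proof (cases "u = 0")
    case True then show ?thesis using u by (simp add: D2_def)
  next
    case False
    have "Im y \<noteq> 0 \<or> Re y < 1"
    proof (cases "Im x \<noteq> 0")
      case True then show ?thesis using u False by simp
    next
      case False
      then have "Re x < 1" using x by (simp add: D2_def)
      have "u * Re x \<le> max 0 (Re x)" using u
        by (cases "Re x \<ge> 0") (auto simp: mult_left_le_one_le mult_nonneg_nonpos)
      then have "u * Re x < 1" using \<open>Re x < 1\<close> by linarith
      then show ?thesis using u by simp
    qed
    then show ?thesis by (simp add: D2_def)
  qed
qed

lemma zero_D2: "0 \<in> D2" by (simp add: D2_def)

lemma starlike_D2: "starlike D2"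
  unfolding starlike_def using seg_D2 zero_D2 by blast


lemma fI_lim0: "(fI \<longlongrightarrow> -1) (at 0)"
proof -
  have "((\<lambda>x. Ln (1 - x)) has_field_derivative inverse (1 - 0) * (-1)) (at 0)"
    by (rule DERIV_chain2[where f=Ln]) (auto intro!: has_field_derivative_Ln derivative_eq_intros simp: complex_nonpos_Reals_iff)
  then have "((\<lambda>y. (Ln (1 - y) - Ln (1 - 0)) / (y - 0)) \<longlongrightarrow> -1) (at 0)"
    by (simp add: DERIV_def)
  then have "((\<lambda>y. Ln (1 - y) / y) \<longlongrightarrow> -1) (at 0)" by simp
  then show ?thesis
    by (rule Lim_transform_eventually) (auto simp: fI_def eventually_at_filter)
qed

lemma fI_deriv:
  assumes "x \<in> D2" "x \<noteq> 0"
  shows "fI field_differentiable at x"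
proof -
  have "((\<lambda>y. Ln (1 - y) / y) has_field_derivative
     (inverse (1 - x) * (-1) * x - Ln (1 - x)) / (x * x)) (at x)"
    using assms D2_nonpos[OF assms(1)]
    by (auto intro!: derivative_eq_intros DERIV_chain2[where f=Ln] has_field_derivative_Ln)
  then have "(fI has_field_derivative
     (inverse (1 - x) * (-1) * x - Ln (1 - x)) / (x * x)) (at x)"
    apply (rule has_field_derivative_transform_within_open[where S="D2 - {0}"])
    using assms open_D2 by (auto simp: fI_def)
  then show ?thesis by (auto simp: field_differentiable_def)
qed

lemma fI_cont: "continuous_on D2 fI"
proof -
  have "continuous (at x) fI" if "x \<in> D2" for x
  proof (cases "x = 0")
    case True then show ?thesis using fI_lim0 by (simp add: continuous_def fI_def)
  next
    case False then show ?thesis using fI_deriv[OF that False]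
      by (simp add: field_differentiable_imp_continuous_at)
  qed
  then show ?thesis using open_D2 by (simp add: continuous_on_eq_continuous_at)
qed

lemma Li2_deriv:
  assumes "x \<in> D2"
  shows "(Li2 has_field_derivative - fI x) (at x)"
proof -
  obtain g where g: "\<And>x. x \<in> D2 \<Longrightarrow> (g has_field_derivative fI x) (at x)"
    using holomorphic_starlike_primitive[OF fI_cont starlike_D2 open_D2, of "{0}"] fI_deriv by blast
  have eq: "Li2 y = - (g y - g 0)" if "y \<in> D2" for y
  proof -
    have "(fI has_contour_integral (g (pathfinish (linepath 0 y)) - g (pathstart (linepath 0 y)))) (linepath 0 y)"
      apply (rule contour_integral_primitive[where S=D2])
        apply (simp add: g has_field_derivative_at_within)
       apply (rule valid_path_linepath)
      using seg_D2[OF that] by (simp only: path_image_linepath)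
    then show ?thesis by (simp add: Li2_fI contour_integral_unique)
  qed
  have "((\<lambda>y. - (g y - g 0)) has_field_derivative - fI x) (at x)"
    using g[OF assms] by (auto intro!: derivative_eq_intros)
  then show ?thesis
    by (rule has_field_derivative_transform_within_open[where S=D2]) (use assms open_D2 eq in auto)
qed



definition cc :: "nat \<Rightarrow> complex" where "cc n = 1 / of_nat n ^ 2"
definition hh :: "complex \<Rightarrow> complex" where "hh z = (\<Sum>n. cc n * z ^ n)"

lemma sq_summable: "summable (\<lambda>n. 1 / real n ^ 2)"
proof -
  have "(\<lambda>n. 1 / real (Suc n) ^ 2) sums (pi^2/6)"
    using inverse_squares_sums by (simp add: add.commute)
  then show ?thesis using summable_Suc_iff sums_summable by blast
qed

lemma cc_summable:
  assumes "norm z \<le> 1"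
  shows "summable (\<lambda>n. cc n * z ^ n)"
proof (rule summable_norm_cancel, rule summable_comparison_test[OF _ sq_summable])
  show "\<exists>N. \<forall>n\<ge>N. norm (norm (cc n * z ^ n)) \<le> 1 / real n ^ 2"
  proof (intro exI allI impI)
    fix n :: nat
    have "norm (cc n * z ^ n) = (1 / real n ^ 2) * norm z ^ n"
      by (simp add: cc_def norm_mult norm_divide norm_power)
    also have "\<dots> \<le> 1 / real n ^ 2"
      using power_le_one[OF norm_ge_zero assms, of n] by (simp add: divide_right_mono)
    finally show "norm (norm (cc n * z ^ n)) \<le> 1 / real n ^ 2" by simp
  qed
qed

lemma diffs_cc: "diffs cc n = 1 / of_nat (Suc n)"
  by (simp add: diffs_def cc_def power2_eq_square)

lemma diffs_sums:
  assumes "norm z < 1"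
  shows "(\<lambda>n. diffs cc n * z ^ n) sums (- fI z)"
proof (cases "z = 0")
  case True
  then show ?thesis
    using powser_sums_zero[of "\<lambda>n. 1 / (1 + of_nat n) :: complex"] by (simp add: fI_def diffs_cc)
next
  case False
  have "(\<lambda>n. - ((-(-z))^n) / of_nat n) sums Ln (1 + (-z))"
    by (rule Ln_series') (use assms in simp)
  then have "(\<lambda>n. - (z^n) / of_nat n) sums Ln (1 - z)" by simp
  then have "(\<lambda>n. - (z^(Suc n)) / of_nat (Suc n)) sums Ln (1 - z)"
    by (subst sums_Suc_iff) simp
  then have "(\<lambda>n. (- (z^(Suc n)) / of_nat (Suc n)) / (-z)) sums (Ln (1 - z) / (-z))"
    by (rule sums_divide)
  moreover have "(\<lambda>n. (- (z^(Suc n)) / of_nat (Suc n)) / (-z)) = (\<lambda>n. diffs cc n * z ^ n)"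
  proof (intro ext)
    fix n
    have nz: "of_nat (Suc n) \<noteq> (0::complex)" by (rule of_nat_neq_0)
    then show "(- (z^(Suc n)) / of_nat (Suc n)) / (-z) = diffs cc n * z ^ n"
      using False by (simp add: diffs_def cc_def field_simps power2_eq_square del: of_nat_Suc)
  qed
  ultimately show ?thesis using False by (simp add: fI_def)
qed

lemma hh_deriv:
  assumes "norm z < 1"
  shows "(hh has_field_derivative - fI z) (at z)"
proof -
  have "(hh has_field_derivative (\<Sum>n. diffs cc n * z^n)) (at z)"
    unfolding hh_def
    by (rule termdiffs_strong'[where K=1]) (use assms cc_summable in auto)
  then show ?thesis using sums_unique[OF diffs_sums[OF assms]] by simp
qed

lemma ball_D2: "ball 0 1 \<subseteq> D2"
proof
  fix z :: complex assume "z \<in> ball 0 1"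
  then have "norm z < 1" by simp
  then have "Re z < 1" using complex_Re_le_cmod[of z] by linarith
  then show "z \<in> D2" by (simp add: D2_def)
qed

lemma Li2_eq_hh:
  assumes "norm z < 1"
  shows "Li2 z = hh z"
proof -
  have "\<exists>c. \<forall>x\<in>ball 0 1. (\<lambda>x. Li2 x - hh x) x = c"
  proof (rule has_field_derivative_zero_constant)
    fix x :: complex assume x: "x \<in> ball 0 1"
    have xD: "x \<in> D2" using x ball_D2 by auto
    have "((\<lambda>x. Li2 x - hh x) has_field_derivative (- fI x - - fI x)) (at x)"
      by (rule DERIV_diff[OF Li2_deriv[OF xD] hh_deriv]) (use x in simp)
    then show "((\<lambda>x. Li2 x - hh x) has_field_derivative 0) (at x within ball 0 1)"
      by (simp add: has_field_derivative_at_within)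
  qed simp
  then obtain c where c: "\<And>x. x \<in> ball 0 1 \<Longrightarrow> Li2 x - hh x = c" by auto
  have "Li2 0 = 0" by (simp add: Li2_def)
  moreover have "hh 0 = 0" unfolding hh_def by (subst powser_zero) (simp add: cc_def)
  ultimately have "c = 0" using c[of 0] by simp
  then show ?thesis using c[of z] assms by simp
qed

lemma hh_cont: "continuous_on (cball 0 1) hh"
proof -
  have "uniform_limit (cball 0 1) (\<lambda>n x. \<Sum>i<n. cc i * x ^ i) (\<lambda>x. suminf (\<lambda>i. cc i * x ^ i)) sequentially"
  proof (rule Weierstrass_m_test[OF _ sq_summable])
    fix n :: nat and x :: complex assume "x \<in> cball 0 1"
    then have "norm x \<le> 1" by simp
    have "norm (cc n * x ^ n) = (1 / real n ^ 2) * norm x ^ n"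
      by (simp add: cc_def norm_mult norm_divide norm_power)
    also have "\<dots> \<le> 1 / real n ^ 2"
      using power_le_one[OF norm_ge_zero \<open>norm x \<le> 1\<close>, of n] by (simp add: divide_right_mono)
    finally show "norm (cc n * x ^ n) \<le> 1 / real n ^ 2" .
  qed
  then show ?thesis unfolding hh_def
    by (rule uniform_limit_theorem[rotated]) (auto intro!: always_eventually continuous_intros)
qed

lemma alt_sum: "(\<lambda>n. (-1)^n * (1 / real n ^ 2)) sums (-(pi^2/12))"
proof -
  define a where "a = (\<lambda>n::nat. 1 / real n ^ 2)" 
  have "(\<lambda>n. 1 / real (Suc n) ^ 2) sums (pi^2/6)"
    using inverse_squares_sums by (simp add: add.commute)
  then have A: "a sums (pi^2/6)"
    by (subst (asm) sums_Suc_iff) (simp add: a_def)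
  have "(\<lambda>k. a k / 4) sums (pi^2/6/4)" by (rule sums_divide[OF A])
  moreover have "(\<lambda>k. a k / 4) = (\<lambda>k. a (2*k))"
    by (auto simp: a_def power2_eq_square)
  ultimately have "(\<lambda>k. a (2*k)) sums (pi^2/24)" by simp
  then have "(\<lambda>k. (\<lambda>n. if even n then a n else 0) (2*k)) sums (pi^2/24)" by simp
  then have E: "(\<lambda>n. if even n then a n else 0) sums (pi^2/24)"
    by (subst (asm) sums_mono_reindex) (auto simp: strict_mono_def)
  have "(\<lambda>n. 2 * (if even n then a n else 0) - a n) sums (2 * (pi^2/24) - pi^2/6)"
    by (intro sums_diff sums_mult E A)
  moreover have "(\<lambda>n. 2 * (if even n then a n else 0) - a n) = (\<lambda>n. (-1)^n * a n)"
    by auto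
  ultimately show ?thesis by (simp add: a_def)
qed

lemma hh_m1: "hh (-1) = - of_real (pi^2) / 12"
proof -
  have "(\<lambda>n. of_real ((-1)^n * (1 / real n ^ 2)) :: complex) sums of_real (-(pi^2/12))"
    by (rule sums_of_real[OF alt_sum])
  moreover have "(\<lambda>n. of_real ((-1)^n * (1 / real n ^ 2)) :: complex) = (\<lambda>n. cc n * (-1) ^ n)"
    by (auto simp: cc_def)
  ultimately show ?thesis unfolding hh_def by (simp add: sums_iff)
qed

lemma Li2_m1: "Li2 (-1) = - of_real (pi^2) / 12"
proof -
  have m1: "-1 \<in> D2" by (simp add: D2_def)
  have "isCont Li2 (-1)"
    using Li2_deriv[OF m1] DERIV_isCont by blast
  then have L: "(Li2 \<longlongrightarrow> Li2 (-1)) (at (-1) within ball 0 1)"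
    using continuous_at_imp_continuous_at_within continuous_within by blast
  have "(hh \<longlongrightarrow> hh (-1)) (at (-1) within cball 0 1)"
    using hh_cont by (simp add: continuous_on_def)
  then have H: "(hh \<longlongrightarrow> hh (-1)) (at (-1) within ball 0 1)"
    by (rule tendsto_within_subset) auto
  have ev: "eventually (\<lambda>x. Li2 x = hh x) (at (-1) within ball 0 1)"
    unfolding eventually_at_filter by (auto intro!: always_eventually simp: Li2_eq_hh)
  have H2: "(hh \<longlongrightarrow> Li2 (-1)) (at (-1) within ball 0 1)"
    by (rule Lim_transform_eventually[OF L ev])
  have nt: "\<not> trivial_limit (at (-1::complex) within ball 0 1)"
    by (simp add: trivial_limit_within islimpt_ball)
  have "Li2 (-1) = hh (-1)" by (rule tendsto_unique[OF nt H2 H])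
  then show ?thesis by (simp add: hh_m1)
qed



lemma sin_strip:
  assumes "0 < t" "t < 2 * pi"
  shows "(t < pi \<longrightarrow> sin t > 0) \<and> (t > pi \<longrightarrow> sin t < 0) \<and> (sin t = 0 \<longrightarrow> t = pi)"
  using sin_gt_zero[of t] sin_lt_zero[of t] assms
  by (metis less_irrefl linorder_neqE_linordered_idom)

lemma strip_facts:
  fixes w :: complex
  assumes "0 < Re w" "Re w < 1"
  defines "u \<equiv> exp (2 * pi * \<i> * w)"
  shows "Im u = exp (-2*pi*Im w) * sin (2*pi*Re w)"
    and "Re u = exp (-2*pi*Im w) * cos (2*pi*Re w)"
    and "Im (exp (- 2 * pi * \<i> * w)) = - (exp (2*pi*Im w) * sin (2*pi*Re w))"
    and "Re (exp (- 2 * pi * \<i> * w)) = exp (2*pi*Im w) * cos (2*pi*Re w)"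
  unfolding u_def by (simp_all add: Im_exp Re_exp)

lemma strip_D2:
  fixes w :: complex
  assumes "0 < Re w" "Re w < 1"
  shows "1 - exp (2 * pi * \<i> * w) \<notin> \<real>\<^sub>\<le>\<^sub>0" and "1 - exp (- 2 * pi * \<i> * w) \<notin> \<real>\<^sub>\<le>\<^sub>0"
    and "exp (2 * pi * \<i> * w) \<in> D2" and "exp (- 2 * pi * \<i> * w) \<in> D2"
proof -
  have t: "0 < 2*pi*Re w" "2*pi*Re w < 2*pi" using assms by auto
  note s = sin_strip[OF t]
  have c: "sin (2*pi*Re w) = 0 \<Longrightarrow> cos (2*pi*Re w) = -1" using s by (metis cos_pi)
  have "Im (exp (2 * pi * \<i> * w)) \<noteq> 0 \<or> Re (exp (2 * pi * \<i> * w)) < 0"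
  proof (cases "sin (2*pi*Re w) = 0")
    case True then show ?thesis using c strip_facts(2)[OF assms] by simp
  next
    case False then show ?thesis using strip_facts(1)[OF assms] by simp
  qed
  moreover have "Im (exp (- 2 * pi * \<i> * w)) \<noteq> 0 \<or> Re (exp (- 2 * pi * \<i> * w)) < 0"
  proof (cases "sin (2*pi*Re w) = 0")
    case True then show ?thesis using c strip_facts(4)[OF assms] by simp
  next
    case False then show ?thesis using strip_facts(3)[OF assms] by simp
  qed
  ultimately show "1 - exp (2 * pi * \<i> * w) \<notin> \<real>\<^sub>\<le>\<^sub>0" "1 - exp (- 2 * pi * \<i> * w) \<notin> \<real>\<^sub>\<le>\<^sub>0"
    "exp (2 * pi * \<i> * w) \<in> D2" "exp (- 2 * pi * \<i> * w) \<in> D2"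
    by (auto simp: complex_nonpos_Reals_iff D2_def)
qed

lemma LOG:
  fixes w :: complex
  assumes "0 < Re w" "Re w < 1"
  shows "Ln (1 - exp (2 * pi * \<i> * w)) - Ln (1 - exp (- 2 * pi * \<i> * w)) = pi * \<i> * (2 * w - 1)"
proof -
  define u where "u = exp (2 * pi * \<i> * w)"
  define v where "v = exp (- 2 * pi * \<i> * w)"
  define D where "D = Ln (1 - u) - Ln (1 - v) - pi * \<i> * (2 * w - 1)"
  have nu: "1 - u \<notin> \<real>\<^sub>\<le>\<^sub>0" and nv: "1 - v \<notin> \<real>\<^sub>\<le>\<^sub>0"
    using strip_D2[OF assms] by (auto simp: u_def v_def)
  have u0: "1 - u \<noteq> 0" and v0: "1 - v \<noteq> 0" using nu nv by auto
  have uv: "v = inverse u" by (simp add: u_def v_def flip: exp_minus)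
  have unz: "u \<noteq> 0" by (simp add: u_def)
  have e: "exp (pi * \<i> * (2 * w - 1)) = - u"
  proof -
    have "pi * \<i> * (2 * w - 1) = 2 * pi * \<i> * w + (- (pi * \<i>))" by (simp add: algebra_simps)
    then show ?thesis by (simp add: u_def exp_diff)
  qed
  have q: "(1 - u) / (1 - v) = - u"
  proof -
    have "1 - u = (- u) * (1 - v)" using unz uv by (simp add: field_simps)
    then show ?thesis using v0 by (metis nonzero_mult_div_cancel_right)
  qed
  have "exp D = 1"
    unfolding D_def using u0 v0 unz
    by (simp add: exp_diff e q)
  then obtain n :: int where re: "Re D = 0" and im: "Im D = of_int (2 * n) * pi"
    by (auto simp: exp_eq_1)
  have t: "0 < 2*pi*Re w" "2*pi*Re w < 2*pi" using assms by auto
  note s = sin_strip[OF t]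
  define A where "A = Im (Ln (1 - u))"
  define B where "B = Im (Ln (1 - v))"
  have ImD: "Im D = A - B - (2*pi*Re w - pi)" by (simp add: D_def A_def B_def algebra_simps)
  have A1: "-pi < A" "A < pi" using mpi_less_Im_Ln[of "1-u"] Im_Ln_less_pi[OF nu] u0 by (auto simp: A_def)
  have B1: "-pi < B" "B < pi" using mpi_less_Im_Ln[of "1-v"] Im_Ln_less_pi[OF nv] v0 by (auto simp: B_def)
  have Imu: "Im (1 - u) = - (exp (-2*pi*Im w) * sin (2*pi*Re w))"
    using strip_facts(1)[OF assms] by (simp add: u_def)
  have Imv: "Im (1 - v) = exp (2*pi*Im w) * sin (2*pi*Re w)"
    using strip_facts(3)[OF assms] by (simp add: v_def)
  have "-2*pi < Im D \<and> Im D < 2*pi"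
  proof (cases "sin (2*pi*Re w) > 0")
    case True
    then have "Im (1 - v) > 0" "Im (1 - u) < 0" using Imu Imv by auto
    then have "0 < B" "A < 0"
      using Im_Ln_pos_lt_imp[of "1-v"] Im_Ln_pos_le[OF u0] A1 by (auto simp: A_def B_def)
    moreover have "2*pi*Re w < pi"
    proof (rule ccontr)
      assume "\<not> 2*pi*Re w < pi"
      then have "2*pi*Re w = pi \<or> 2*pi*Re w > pi" by linarith
      then show False using s True sin_pi by (metis less_asym less_irrefl)
    qed
    ultimately show ?thesis using ImD A1 B1 t by linarith
  next
    case False
    show ?thesis
    proof (cases "sin (2*pi*Re w) < 0")
      case True
      then have "Im (1 - v) < 0" "Im (1 - u) > 0" using Imu Imv
        by (auto simp: mult_pos_neg)
      then have "0 < A" "B < 0"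
        using Im_Ln_pos_lt_imp[of "1-u"] Im_Ln_pos_le[OF v0] B1 by (auto simp: A_def B_def)
      moreover have "2*pi*Re w > pi"
      proof (rule ccontr)
        assume "\<not> 2*pi*Re w > pi"
        then have "2*pi*Re w = pi \<or> 2*pi*Re w < pi" by linarith
        then show False using s True sin_pi by (metis less_asym less_irrefl)
      qed
      ultimately show ?thesis using ImD A1 B1 t by linarith
    next
      case False2: False
      then have z: "sin (2*pi*Re w) = 0" using False by linarith
      then have "2*pi*Re w = pi" using s by blast
      have cs: "cos (2*pi*Re w) = -1" using \<open>2*pi*Re w = pi\<close> cos_pi by metis
      have "Re u < 0" using strip_facts(2)[OF assms] cs by (simp add: u_def)
      moreover have "Re v < 0" using strip_facts(4)[OF assms] cs by (simp add: v_def)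
      moreover have "Im (1 - u) = 0" "Im (1 - v) = 0" using Imu Imv z by simp_all
      ultimately have "A = 0" "B = 0"
        using Im_Ln_eq_0[OF u0] Im_Ln_eq_0[OF v0] by (auto simp: A_def B_def)
      then show ?thesis using ImD \<open>2*pi*Re w = pi\<close> by simp
    qed
  qed
  then have h: "real_of_int n * (2*pi) < 1 * (2*pi)" "(-1) * (2*pi) < real_of_int n * (2*pi)"
    using im by (simp_all add: algebra_simps)
  have "real_of_int n < 1" "-1 < real_of_int n"
    using mult_less_cancel_right_pos[of "2*pi"] h pi_gt_zero by (metis mult_pos_pos zero_less_numeral)+
  then have "n = 0" by linarith
  then have "D = 0" using re im by (simp add: complex_eq_iff)
  then show ?thesis by (simp add: D_def u_def v_def)
qed



lemma Li2_chain [derivative_intros]: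
  assumes "(g has_field_derivative g') (at x within s)" "g x \<in> D2"
  shows "((\<lambda>x. Li2 (g x)) has_field_derivative (- fI (g x) * g')) (at x within s)"
  by (rule DERIV_chain2[where f=Li2 and g=g, OF Li2_deriv[OF assms(2)] assms(1)])

lemma INV:
  fixes w :: complex
  assumes "0 < Re w" "Re w < 1"
  shows "Li2 (exp (2 * pi * \<i> * w)) + Li2 (exp (- 2 * pi * \<i> * w)) = of_real (pi^2) * (2 * w^2 - 2 * w + 1/3)"
proof -
  define S where "S = {w::complex. 0 < Re w \<and> Re w < 1}"
  define G where "G w = Li2 (exp (2 * pi * \<i> * w)) + Li2 (exp (- 2 * pi * \<i> * w)) - of_real (pi^2) * (2 * w^2 - 2 * w + 1/3)" for w
  have cS: "convex S"
  proof -
    have "S = {w. Re w > 0} \<inter> {w. Re w < 1}" by (auto simp: S_def)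
    then show ?thesis by (metis convex_Int convex_halfspace_Re_gt convex_halfspace_Re_lt)
  qed
  have "\<exists>c. \<forall>x\<in>S. G x = c"
  proof (rule has_field_derivative_zero_constant[OF cS])
    fix x assume "x \<in> S"
    then have x: "0 < Re x" "Re x < 1" by (auto simp: S_def)
    define u where "u = exp (2 * pi * \<i> * x)"
    define v where "v = exp (- 2 * pi * \<i> * x)"
    have uD: "u \<in> D2" and vD: "v \<in> D2" using strip_D2[OF x] by (auto simp: u_def v_def)
    have u0: "u \<noteq> 0" "v \<noteq> 0" by (auto simp: u_def v_def)
    have d1: "((\<lambda>x. exp (2 * pi * \<i> * x)) has_field_derivative u * (2 * pi * \<i>)) (at x)"
      unfolding u_def by (auto intro!: derivative_eq_intros)
    have d2: "((\<lambda>x. exp (- 2 * pi * \<i> * x)) has_field_derivative v * (- 2 * pi * \<i>)) (at x)"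
      unfolding v_def by (auto intro!: derivative_eq_intros)
    have d3: "((\<lambda>x. of_real (pi^2) * (2 * x^2 - 2 * x + 1/3)) has_field_derivative of_real (pi^2) * (4 * x - 2)) (at x)"
      by (auto intro!: derivative_eq_intros)
    have dG: "(G has_field_derivative (- fI u * (u * (2 * pi * \<i>)) + - fI v * (v * (- 2 * pi * \<i>)) - of_real (pi^2) * (4 * x - 2))) (at x)"
    proof -
      have dL1: "((\<lambda>x. Li2 (exp (2*pi*\<i>*x))) has_field_derivative (- fI u * (u * (2*pi*\<i>)))) (at x)"
        unfolding u_def by (rule Li2_chain[OF d1[unfolded u_def]]) (use uD in \<open>simp add: u_def\<close>)
      have dL2: "((\<lambda>x. Li2 (exp (- 2*pi*\<i>*x))) has_field_derivative (- fI v * (v * (- 2*pi*\<i>)))) (at x)"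
        unfolding v_def by (rule Li2_chain[OF d2[unfolded v_def]]) (use vD in \<open>simp add: v_def\<close>)
      show ?thesis unfolding G_def by (rule DERIV_diff[OF DERIV_add[OF dL1 dL2] d3])
    qed
    have L: "Ln (1 - u) = Ln (1 - v) + pi * \<i> * (2 * x - 1)"
      using LOG[OF x] by (simp add: u_def v_def algebra_simps)
    have "- fI u * (u * (2 * pi * \<i>)) + - fI v * (v * (- 2 * pi * \<i>)) - of_real (pi^2) * (4 * x - 2) = 0"
      using u0 by (simp add: fI_def L field_simps power2_eq_square)
    with dG show "(G has_field_derivative 0) (at x within S)"
      by (simp add: has_field_derivative_at_within)
  qed
  then obtain c where c: "\<And>x. x \<in> S \<Longrightarrow> G x = c" by auto
  have h: "(1/2::complex) \<in> S" by (simp add: S_def)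
  have "exp (2 * pi * \<i> * (1/2)) = -1" "exp (- 2 * pi * \<i> * (1/2)) = -1"
    by (simp_all add: exp_minus)
  then have "G (1/2) = 0"
    by (simp add: G_def Li2_m1 power2_eq_square field_simps)
  then have "c = 0" using c[OF h] by simp
  then have "G w = 0" using c[of w] assms by (simp add: S_def)
  then show ?thesis by (simp add: G_def)
qed



lemma exp_shift:
  fixes X :: complex and k :: int
  shows "exp (2 * pi * \<i> * (X / (2 * pi * \<i>) + of_int k)) = exp X"
    and "exp (- 2 * pi * \<i> * (X / (2 * pi * \<i>) + of_int k)) = exp (- X)"
proof -
  have e: "exp (2 * of_int k * pi * \<i>) = 1" by (rule exp_integer_2pi) simp
  have e2: "exp (2 * of_int (-k) * pi * \<i>) = 1" by (rule exp_integer_2pi) simp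
  have "2 * pi * \<i> * (X / (2 * pi * \<i>) + of_int k) = X + 2 * of_int k * pi * \<i>"
    by (simp add: field_simps)
  then show "exp (2 * pi * \<i> * (X / (2 * pi * \<i>) + of_int k)) = exp X"
    by (simp only: exp_add e) simp
  have "- 2 * pi * \<i> * (X / (2 * pi * \<i>) + of_int k) = - X + 2 * of_int (-k) * pi * \<i>"
    by (simp add: field_simps)
  then show "exp (- 2 * pi * \<i> * (X / (2 * pi * \<i>) + of_int k)) = exp (- X)"
    by (simp only: exp_add e2) simp
qed

lemma calL2_C1: "Im w < 0 \<Longrightarrow> calL2 w = of_real (pi^2) * (2 * w^2 - 2 * w + 1/3) - Li2 (exp (- 2 * pi * \<i> * w))"
  by (simp add: calL2_def)

lemma calL2_C2: "0 < Re w \<Longrightarrow> Re w < 1 \<Longrightarrow> calL2 w = Li2 (exp (2 * pi * \<i> * w))"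
  using INV[of w] by (auto simp: calL2_def algebra_simps)

lemma calL2_C3: "0 < Re w \<Longrightarrow> Re w < 1 \<Longrightarrow> calL2 w = of_real (pi^2) * (2 * w^2 - 2 * w + 1/3) - Li2 (exp (- 2 * pi * \<i> * w))"
  using INV[of w] by (auto simp: calL2_def algebra_simps)

theorem lemma3p3:
  fixes p :: nat and z :: complex
  assumes "p > 0"
  shows "(((- kappa < Re (xi p * z) \<and> Re (xi p * z) < kappa) \<or> (0 < Im (xi p * z) \<and> Im (xi p * z) < 2 * pi))
           \<longrightarrow> Fp p z = (1 / xi p) * Li2 (exp (- xi p * (1 + z))) - (1 / xi p) * Li2 (exp (- xi p * (1 - z)))
                        + of_real kappa * z - 2 * of_real pi * \<i>)
       \<and> ((0 < Im (xi p * z) \<and> Im (xi p * z) < 2 * pi)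
           \<longrightarrow> Fp p z = (1 / xi p) * Li2 (exp (xi p * (1 - z))) - (1 / xi p) * Li2 (exp (xi p * (1 + z)))
                        - of_real kappa * z + 4 * of_nat p * of_real (pi^2) / xi p)"
proof -
  define \<xi> where "\<xi> = xi p"
  define a where "a = \<xi> * z"
  define w1 where "w1 = xi p * (1 - z) / (2 * pi * \<i>) - of_nat p + 1"
  define w2 where "w2 = xi p * (1 + z) / (2 * pi * \<i>) - of_nat p"
  define P where "P w = of_real (pi^2) * (2 * w^2 - 2 * w + 1/3)" for w :: complex
  have xi0: "\<xi> \<noteq> 0"
  proof
    assume "\<xi> = 0"
    then have "Im \<xi> = 0" by simp
    then show False using assms by (simp add: \<xi>_def xi_def)
  qed
  have pi0: "(of_real pi :: complex) \<noteq> 0" by simp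
  have W1: "w1 = 1 - \<i> * of_real kappa / (2 * pi) + \<i> * a / (2 * pi)"
    unfolding w1_def a_def \<xi>_def xi_def using pi0
    by (simp add: field_simps)
  have W2: "w2 = - \<i> * of_real kappa / (2 * pi) - \<i> * a / (2 * pi)"
    unfolding w2_def a_def \<xi>_def xi_def using pi0
    by (simp add: field_simps)
  have ReW1: "Re w1 = 1 - Im a / (2 * pi)" and ImW1: "Im w1 = (Re a - kappa) / (2 * pi)"
    unfolding W1 by (simp_all add: field_simps)
  have ReW2: "Re w2 = Im a / (2 * pi)" and ImW2: "Im w2 = - (kappa + Re a) / (2 * pi)"
    unfolding W2 by (simp_all add: field_simps)
  have w1s: "w1 = (\<xi> * (1 - z)) / (2 * pi * \<i>) + of_int (1 - int p)"
    unfolding w1_def \<xi>_def by simp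
  have w2s: "w2 = (\<xi> * (1 + z)) / (2 * pi * \<i>) + of_int (- int p)"
    unfolding w2_def \<xi>_def by simp
  have E1: "exp (2 * pi * \<i> * w1) = exp (\<xi> * (1 - z))" "exp (- 2 * pi * \<i> * w1) = exp (- \<xi> * (1 - z))"
    unfolding w1s by (simp_all only: exp_shift) simp
  have E2: "exp (2 * pi * \<i> * w2) = exp (\<xi> * (1 + z))" "exp (- 2 * pi * \<i> * w2) = exp (- \<xi> * (1 + z))"
    unfolding w2s by (simp_all only: exp_shift) simp
  have Fp_eq: "Fp p z = (1 / \<xi>) * (calL2 w1 - calL2 w2) - of_real kappa * z + 4 * of_nat p * of_real (pi^2) / \<xi>"
    unfolding Fp_def w1_def w2_def \<xi>_def by simp
  have alg: "(P w1 - P w2) / \<xi> - of_real kappa * z + 4 * of_nat p * of_real (pi^2) / \<xi> = of_real kappa * z - 2 * of_real pi * \<i>"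
  proof -
    have H1: "P w1 - P w2 = 2 * of_real kappa * (\<xi> * z) - 2 * pi * \<i> * of_real kappa"
      unfolding P_def W1 W2 a_def using pi0 by (simp add: field_simps power2_eq_square)
    have H2: "4 * of_nat p * of_real (pi^2) = 2 * pi * \<i> * of_real kappa - 2 * pi * \<i> * \<xi>"
      unfolding \<xi>_def xi_def by (simp add: field_simps power2_eq_square)
    have "(P w1 - P w2) / \<xi> - of_real kappa * z + 4 * of_nat p * of_real (pi^2) / \<xi>
        = ((P w1 - P w2) - of_real kappa * z * \<xi> + 4 * of_nat p * of_real (pi^2)) / \<xi>"
      using xi0 by (simp add: field_simps)
    also have "\<dots> = (of_real kappa * z * \<xi> - 2 * pi * \<i> * \<xi>) / \<xi>"
      unfolding H1 H2 by (simp add: algebra_simps)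
    also have "\<dots> = of_real kappa * z - 2 * of_real pi * \<i>"
      using xi0 by (simp add: field_simps)
    finally show ?thesis .
  qed
  have part1: "Fp p z = (1 / \<xi>) * Li2 (exp (- \<xi> * (1 + z))) - (1 / \<xi>) * Li2 (exp (- \<xi> * (1 - z)))
                        + of_real kappa * z - 2 * of_real pi * \<i>"
    if h: "(- kappa < Re a \<and> Re a < kappa) \<or> (0 < Im a \<and> Im a < 2 * pi)"
  proof -
    have "calL2 w1 = P w1 - Li2 (exp (- 2 * pi * \<i> * w1)) \<and> calL2 w2 = P w2 - Li2 (exp (- 2 * pi * \<i> * w2))"
    proof (cases "- kappa < Re a \<and> Re a < kappa")
      case True
      then have "Im w1 < 0" "Im w2 < 0" using ImW1 ImW2 by (simp_all add: divide_neg_pos)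
      then show ?thesis using calL2_C1 by (simp add: P_def)
    next
      case False
      then have "0 < Im a" "Im a < 2 * pi" using h by auto
      then have q: "0 < Im a / (2*pi)" "Im a / (2*pi) < 1" by (simp_all add: pi_gt_zero divide_less_eq)
      then have "0 < Re w1" "Re w1 < 1" "0 < Re w2" "Re w2 < 1" using ReW1 ReW2 apply - apply linarith+ done
      then show ?thesis using calL2_C3 by (simp add: P_def)
    qed
    then have c1: "calL2 w1 = P w1 - Li2 (exp (- \<xi> * (1 - z)))"
          and c2: "calL2 w2 = P w2 - Li2 (exp (- \<xi> * (1 + z)))"
      unfolding E1 E2 by auto
    have "Fp p z = ((P w1 - P w2) / \<xi> - of_real kappa * z + 4 * of_nat p * of_real (pi^2) / \<xi>)
            + (1 / \<xi>) * Li2 (exp (- \<xi> * (1 + z))) - (1 / \<xi>) * Li2 (exp (- \<xi> * (1 - z)))"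
      unfolding Fp_eq c1 c2 by (simp add: diff_divide_distrib algebra_simps)
    then show ?thesis unfolding alg by (simp add: algebra_simps)
  qed
  have part2: "Fp p z = (1 / \<xi>) * Li2 (exp (\<xi> * (1 - z))) - (1 / \<xi>) * Li2 (exp (\<xi> * (1 + z)))
                        - of_real kappa * z + 4 * of_nat p * of_real (pi^2) / \<xi>"
    if h: "0 < Im a \<and> Im a < 2 * pi"
  proof -
    have q: "0 < Im a / (2*pi)" "Im a / (2*pi) < 1" using h by (simp_all add: pi_gt_zero divide_less_eq)
    then have "0 < Re w1" "Re w1 < 1" "0 < Re w2" "Re w2 < 1" using ReW1 ReW2 apply - apply linarith+ done
    then have "calL2 w1 = Li2 (exp (\<xi> * (1 - z)))" "calL2 w2 = Li2 (exp (\<xi> * (1 + z)))"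
      using calL2_C2 E1 E2 by auto
    then show ?thesis unfolding Fp_eq by (simp add: right_diff_distrib)
  qed
  show ?thesis using part1 part2 unfolding a_def \<xi>_def by blast
qed

end
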